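(* Let $(\mu,u)$ be a classical structure on $A$ with spiders $\Xi_n^m$, classical channel $C_\Xi$, complementary endomorphism $H$, and let $\mathrm{CNOT}:=(\Xi_2^1\otimes H)\circ(1_A\otimes H\otimes 1_A)\circ(1_A\otimes\Xi_1^2)\circ(1_A\otimes H)$. Then the morphism $$\mathrm{Bell\text{-}Meas}:=\big((C_\Xi\circ H)\otimes C_\Xi\big)\circ\mathrm{CNOT}:A\otimes A\to A\otimes A$$ is a non-degenerate destructive measurement on two systems of type $A$, i.e. it equals $(C_\Xi\otimes C_\Xi)\circ U$ for some unitary $U:A\otimes A\to A\otimes A$ in $\mathbf C^{pure}$.
   Context: Setting. $\mathbf C$ is a strict symmetric monoidal category with monoidal unit $\mathrm I$, symmetry $\sigma$, and a dagger functor $(-)^\dagger$ (identity on objects, contravariant, involutive, strict monoidal). $\mathbf C^{pure}$ is a subcategory of $\mathbf C$ with the same objects, closed under $\otimes$ and $\dagger$, containing identities, symmetries and the maps $\eta_A$ below. Every object $A$ is self-dual: there is $\eta_A:\mathrm I\to A\otimes A$ in $\mathbf C^{pure}$ with $\epsilon_A:=\eta_A^\dagger$, $(\epsilon_A\otimes 1_A)\circ(1_A\otimes\eta_A)=1_A$ and $\sigma_{A,A}\circ\eta_A=\eta_A$. A morphism $U$ is unitary if $U^\dagger\circ U=1$ and $U\circ U^\dagger=1$. Environment structure: a family of morphisms $\top_A:A\to\mathrm I$ in $\mathbf C$ such that (E1) for all objects $A,B$ and all $f,g\in\mathbf C^{pure}(A,B)$: $f^\dagger\circ f=g^\dagger\circ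 g$ if and only if $\top_B\circ f=\top_B\circ g$; (E2) $\top_{A\otimes B}=\top_A\otimes\top_B$; (E3) $(1_A\otimes\top_A)\circ\eta_A=\bot_A$, where $\bot_A:=\top_A^\dagger$. Classical structure on $A$: morphisms $\mu:A\otimes A\to A$ and $u:\mathrm I\to A$ in $\mathbf C^{pure}$, with $\delta:=\mu^\dagger$, such that $\mu$ is associative with unit $u$, $\mu\circ\sigma_{A,A}=\mu$, $(1_A\otimes\mu)\circ(\delta\otimes 1_A)=\delta\circ\mu$, $\mu\circ\delta=1_A$, and $\eta_A=\delta\circ u$. Spiders: $\mu_0:=u$, $\mu_1:=1_A$, $\mu_{k+1}:=\mu\circ(\mu_k\otimes 1_A)$, and $\Xi_n^m:=\mu_m^\dagger\circ\mu_n:A^{\otimes n}\to A^{\otimes m}$. The classical channel is $C_\Xi:=(1_A\otimes\top_A)\circ\Xi_1^2$. Complementary endomorphism: $H:A\to A$ in $\mathbf C^{pure}$ with $(H\otimes 1_A)\circ\eta_A=(1_A\otimes H)\circ\eta_A$, $H^\dagger=H$, $H$ unitary, and $\Xi_2^1\circ(H\otimes H)\circ\Xi_1^2=\Xi_0^1\circ\Xi_1^0$. A non-degenerate destructive measurement on $n$ systems of type $A$ is a morphism $(C_\Xi\otimes\cdots\otimes C_\Xi)\circ U$ with $U:A^{\otimes n}\to A^{\otimes n}$ unitary. *)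

theory Defs
  imports Main
begin

text \<open>A strict symmetric monoidal dagger category with a pure subcategory,
  chosen self-dualities and an environment structure, bundled as a record.
  Objects are all elements of type 'o; morphisms are the elements m of type 'm
  with c_arr C m.  c_comp C g f is g after f.\<close>

record ('o, 'm) env_cat =
  c_arr   :: "'m \<Rightarrow> bool"
  c_dom   :: "'m \<Rightarrow> 'o"
  c_cod   :: "'m \<Rightarrow> 'o"
  c_comp  :: "'m \<Rightarrow> 'm \<Rightarrow> 'm"
  c_id    :: "'o \<Rightarrow> 'm"
  c_otimes :: "'o \<Rightarrow> 'o \<Rightarrow> 'o"
  c_tens  :: "'m \<Rightarrow> 'm \<Rightarrow> 'm"
  c_unit  :: "'o"
  c_sym   :: "'o \<Rightarrow> 'o \<Rightarrow> 'm"
  c_dag   :: "'m \<Rightarrow> 'm"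
  c_pure  :: "'m \<Rightarrow> bool"
  c_eta   :: "'o \<Rightarrow> 'm"
  c_top   :: "'o \<Rightarrow> 'm"

definition composable :: "('o, 'm, 'z) env_cat_scheme \<Rightarrow> 'm \<Rightarrow> 'm \<Rightarrow> bool" where
  "composable C g f \<longleftrightarrow> c_arr C f \<and> c_arr C g \<and> c_dom C g = c_cod C f"

locale environment_category =
  fixes C :: "('o, 'm, 'z) env_cat_scheme"
  assumes
    id_arr: "c_arr C (c_id C a)" and
    id_dom: "c_dom C (c_id C a) = a" and
    id_cod: "c_cod C (c_id C a) = a" and
    comp_arr: "composable C g f \<Longrightarrow> c_arr C (c_comp C g f)" and
    comp_dom: "composable C g f \<Longrightarrow> c_dom C (c_comp C g f) = c_dom C f" and
    comp_cod: "composable C g f \<Longrightarrow> c_cod C (c_comp C g f) = c_cod C g" and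
    comp_id_right: "c_arr C f \<Longrightarrow> c_comp C f (c_id C (c_dom C f)) = f" and
    comp_id_left: "c_arr C f \<Longrightarrow> c_comp C (c_id C (c_cod C f)) f = f" and
    comp_assoc: "composable C g f \<Longrightarrow> composable C h g \<Longrightarrow>
        c_comp C h (c_comp C g f) = c_comp C (c_comp C h g) f" and
    tens_arr: "c_arr C f \<Longrightarrow> c_arr C g \<Longrightarrow> c_arr C (c_tens C f g)" and
    tens_dom: "c_arr C f \<Longrightarrow> c_arr C g \<Longrightarrow>
        c_dom C (c_tens C f g) = c_otimes C (c_dom C f) (c_dom C g)" and
    tens_cod: "c_arr C f \<Longrightarrow> c_arr C g \<Longrightarrow>
        c_cod C (c_tens C f g) = c_otimes C (c_cod C f) (c_cod C g)" and
    tens_id: "c_tens C (c_id C a) (c_id C b) = c_id C (c_otimes C a b)" and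
    interchange: "composable C g f \<Longrightarrow> composable C g' f' \<Longrightarrow>
        c_tens C (c_comp C g f) (c_comp C g' f') = c_comp C (c_tens C g g') (c_tens C f f')" and
    otimes_assoc: "c_otimes C (c_otimes C a b) c = c_otimes C a (c_otimes C b c)" and
    otimes_unit_left: "c_otimes C (c_unit C) a = a" and
    otimes_unit_right: "c_otimes C a (c_unit C) = a" and
    tens_assoc: "c_arr C f \<Longrightarrow> c_arr C g \<Longrightarrow> c_arr C h \<Longrightarrow>
        c_tens C (c_tens C f g) h = c_tens C f (c_tens C g h)" and
    tens_unit_left: "c_arr C f \<Longrightarrow> c_tens C (c_id C (c_unit C)) f = f" and
    tens_unit_right: "c_arr C f \<Longrightarrow> c_tens C f (c_id C (c_unit C)) = f" and
    sym_arr: "c_arr C (c_sym C a b)" and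
    sym_dom: "c_dom C (c_sym C a b) = c_otimes C a b" and
    sym_cod: "c_cod C (c_sym C a b) = c_otimes C b a" and
    sym_natural: "c_arr C f \<Longrightarrow> c_arr C g \<Longrightarrow>
        c_comp C (c_sym C (c_cod C f) (c_cod C g)) (c_tens C f g)
        = c_comp C (c_tens C g f) (c_sym C (c_dom C f) (c_dom C g))" and
    sym_inverse: "c_comp C (c_sym C b a) (c_sym C a b) = c_id C (c_otimes C a b)" and
    sym_hexagon: "c_sym C a (c_otimes C b c)
        = c_comp C (c_tens C (c_id C b) (c_sym C a c)) (c_tens C (c_sym C a b) (c_id C c))" and
    dag_arr: "c_arr C f \<Longrightarrow> c_arr C (c_dag C f)" and
    dag_dom: "c_arr C f \<Longrightarrow> c_dom C (c_dag C f) = c_cod C f" and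
    dag_cod: "c_arr C f \<Longrightarrow> c_cod C (c_dag C f) = c_dom C f" and
    dag_invol: "c_arr C f \<Longrightarrow> c_dag C (c_dag C f) = f" and
    dag_id: "c_dag C (c_id C a) = c_id C a" and
    dag_comp: "composable C g f \<Longrightarrow> c_dag C (c_comp C g f) = c_comp C (c_dag C f) (c_dag C g)" and
    dag_tens: "c_arr C f \<Longrightarrow> c_arr C g \<Longrightarrow> c_dag C (c_tens C f g) = c_tens C (c_dag C f) (c_dag C g)" and
    dag_sym: "c_dag C (c_sym C a b) = c_sym C b a" and
    pure_arr: "c_pure C f \<Longrightarrow> c_arr C f" and
    pure_id: "c_pure C (c_id C a)" and
    pure_sym: "c_pure C (c_sym C a b)" and
    pure_eta: "c_pure C (c_eta C a)" and
    pure_comp: "c_pure C f \<Longrightarrow> c_pure C g \<Longrightarrow> c_dom C g = c_cod C f \<Longrightarrow> c_pure C (c_comp C g f)" and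
    pure_tens: "c_pure C f \<Longrightarrow> c_pure C g \<Longrightarrow> c_pure C (c_tens C f g)" and
    pure_dag: "c_pure C f \<Longrightarrow> c_pure C (c_dag C f)" and
    eta_arr: "c_arr C (c_eta C a)" and
    eta_dom: "c_dom C (c_eta C a) = c_unit C" and
    eta_cod: "c_cod C (c_eta C a) = c_otimes C a a" and
    eta_snake: "c_comp C (c_tens C (c_dag C (c_eta C a)) (c_id C a))
                 (c_tens C (c_id C a) (c_eta C a)) = c_id C a" and
    eta_sym: "c_comp C (c_sym C a a) (c_eta C a) = c_eta C a" and
    top_arr: "c_arr C (c_top C a)" and
    top_dom: "c_dom C (c_top C a) = a" and
    top_cod: "c_cod C (c_top C a) = c_unit C" and
    E1: "c_pure C f \<Longrightarrow> c_pure C g \<Longrightarrow> c_dom C f = a \<Longrightarrow> c_dom C g = a \<Longrightarrow>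
        c_cod C f = b \<Longrightarrow> c_cod C g = b \<Longrightarrow>
        (c_comp C (c_dag C f) f = c_comp C (c_dag C g) g
          \<longleftrightarrow> c_comp C (c_top C b) f = c_comp C (c_top C b) g)" and
    E2: "c_top C (c_otimes C a b) = c_tens C (c_top C a) (c_top C b)" and
    E3: "c_comp C (c_tens C (c_id C a) (c_top C a)) (c_eta C a) = c_dag C (c_top C a)"

definition unitary :: "('o, 'm, 'z) env_cat_scheme \<Rightarrow> 'm \<Rightarrow> bool" where
  "unitary C U \<longleftrightarrow> c_arr C U
     \<and> c_comp C (c_dag C U) U = c_id C (c_dom C U)
     \<and> c_comp C U (c_dag C U) = c_id C (c_cod C U)"

definition classical_structure ::
    "('o, 'm, 'z) env_cat_scheme \<Rightarrow> 'o \<Rightarrow> 'm \<Rightarrow> 'm \<Rightarrow> bool" where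
  "classical_structure C A mu u \<longleftrightarrow>
     c_pure C mu \<and> c_dom C mu = c_otimes C A A \<and> c_cod C mu = A
   \<and> c_pure C u \<and> c_dom C u = c_unit C \<and> c_cod C u = A
   \<and> c_comp C mu (c_tens C mu (c_id C A)) = c_comp C mu (c_tens C (c_id C A) mu)
   \<and> c_comp C mu (c_tens C u (c_id C A)) = c_id C A
   \<and> c_comp C mu (c_tens C (c_id C A) u) = c_id C A
   \<and> c_comp C mu (c_sym C A A) = mu
   \<and> c_comp C (c_tens C (c_id C A) mu) (c_tens C (c_dag C mu) (c_id C A))
       = c_comp C (c_dag C mu) mu
   \<and> c_comp C mu (c_dag C mu) = c_id C A
   \<and> c_eta C A = c_comp C (c_dag C mu) u"

fun spider_mu :: "('o, 'm, 'z) env_cat_scheme \<Rightarrow> 'o \<Rightarrow> 'm \<Rightarrow> 'm \<Rightarrow> nat \<Rightarrow> 'm" where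
  "spider_mu C A mu u 0 = u"
| "spider_mu C A mu u (Suc 0) = c_id C A"
| "spider_mu C A mu u (Suc (Suc k)) =
     c_comp C mu (c_tens C (spider_mu C A mu u (Suc k)) (c_id C A))"

definition Xi :: "('o, 'm, 'z) env_cat_scheme \<Rightarrow> 'o \<Rightarrow> 'm \<Rightarrow> 'm \<Rightarrow> nat \<Rightarrow> nat \<Rightarrow> 'm" where
  "Xi C A mu u n m = c_comp C (c_dag C (spider_mu C A mu u m)) (spider_mu C A mu u n)"

definition classical_channel :: "('o, 'm, 'z) env_cat_scheme \<Rightarrow> 'o \<Rightarrow> 'm \<Rightarrow> 'm \<Rightarrow> 'm" where
  "classical_channel C A mu u = c_comp C (c_tens C (c_id C A) (c_top C A)) (Xi C A mu u 1 2)"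

definition complementary ::
    "('o, 'm, 'z) env_cat_scheme \<Rightarrow> 'o \<Rightarrow> 'm \<Rightarrow> 'm \<Rightarrow> 'm \<Rightarrow> bool" where
  "complementary C A mu u H \<longleftrightarrow>
     c_pure C H \<and> c_dom C H = A \<and> c_cod C H = A
   \<and> c_comp C (c_tens C H (c_id C A)) (c_eta C A) = c_comp C (c_tens C (c_id C A) H) (c_eta C A)
   \<and> c_dag C H = H
   \<and> unitary C H
   \<and> c_comp C (Xi C A mu u 2 1) (c_comp C (c_tens C H H) (Xi C A mu u 1 2))
       = c_comp C (Xi C A mu u 0 1) (Xi C A mu u 1 0)"

definition CNOT :: "('o, 'm, 'z) env_cat_scheme \<Rightarrow> 'o \<Rightarrow> 'm \<Rightarrow> 'm \<Rightarrow> 'm \<Rightarrow> 'm" where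
  "CNOT C A mu u H =
     c_comp C (c_tens C (Xi C A mu u 2 1) H)
      (c_comp C (c_tens C (c_tens C (c_id C A) H) (c_id C A))
        (c_comp C (c_tens C (c_id C A) (Xi C A mu u 1 2))
          (c_tens C (c_id C A) H)))"

definition Bell_Meas :: "('o, 'm, 'z) env_cat_scheme \<Rightarrow> 'o \<Rightarrow> 'm \<Rightarrow> 'm \<Rightarrow> 'm \<Rightarrow> 'm" where
  "Bell_Meas C A mu u H =
     c_comp C (c_tens C (c_comp C (classical_channel C A mu u) H) (classical_channel C A mu u))
       (CNOT C A mu u H)"

end

theory Submission
  imports Defs
begin

locale bell = environment_category C for C :: "('o, 'm, 'z) env_cat_scheme" +
  fixes A :: 'o and mu u H :: 'm
  assumes cs: "classical_structure C A mu u" and cp: "complementary C A mu u H"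
begin

abbreviation cmp (infixr "\<cdot>" 55) where "g \<cdot> f \<equiv> c_comp C g f"
abbreviation tns (infixr "\<otimes>" 65) where "f \<otimes> g \<equiv> c_tens C f g"
abbreviation arr where "arr \<equiv> c_arr C"
abbreviation dom where "dom \<equiv> c_dom C"
abbreviation cod where "cod \<equiv> c_cod C"
abbreviation dg where "dg \<equiv> c_dag C"
abbreviation ii where "ii \<equiv> c_id C A"
abbreviation oo (infixr "\<oplus>" 65) where "a \<oplus> b \<equiv> c_otimes C a b"
abbreviation dl where "dl \<equiv> c_dag C mu"
abbreviation et where "et \<equiv> c_eta C A"

lemma arr_cmp[simp]: "arr f \<Longrightarrow> arr g \<Longrightarrow> dom g = cod f \<Longrightarrow> arr (g \<cdot> f)"
  using comp_arr composable_def by metis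
lemma dom_cmp[simp]: "arr f \<Longrightarrow> arr g \<Longrightarrow> dom g = cod f \<Longrightarrow> dom (g \<cdot> f) = dom f"
  using comp_dom composable_def by metis
lemma cod_cmp[simp]: "arr f \<Longrightarrow> arr g \<Longrightarrow> dom g = cod f \<Longrightarrow> cod (g \<cdot> f) = cod g"
  using comp_cod composable_def by metis

lemmas ty[simp] = id_arr id_dom id_cod tens_arr tens_dom tens_cod otimes_assoc otimes_unit_left
  otimes_unit_right dag_arr dag_dom dag_cod dag_invol dag_id sym_arr sym_dom sym_cod eta_arr eta_dom eta_cod
  top_arr top_dom top_cod

lemma mu_ty[simp]: "arr mu" "dom mu = A \<oplus> A" "cod mu = A"
  "arr u" "dom u = c_unit C" "cod u = A"
  "arr H" "dom H = A" "cod H = A"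
  using cs cp pure_arr unfolding classical_structure_def complementary_def by auto

lemma assoc: "arr f \<Longrightarrow> arr g \<Longrightarrow> arr h \<Longrightarrow> dom g = cod f \<Longrightarrow> dom h = cod g \<Longrightarrow>
   (h \<cdot> g) \<cdot> f = h \<cdot> (g \<cdot> f)"
  using comp_assoc composable_def by metis

lemma idl[simp]: "arr f \<Longrightarrow> cod f = a \<Longrightarrow> c_id C a \<cdot> f = f"
  using comp_id_left by blast
lemma idr[simp]: "arr f \<Longrightarrow> dom f = a \<Longrightarrow> f \<cdot> c_id C a = f"
  using comp_id_right by blast

lemma ic: "arr f \<Longrightarrow> arr g \<Longrightarrow> arr f' \<Longrightarrow> arr g' \<Longrightarrow> dom g = cod f \<Longrightarrow> dom g' = cod f' \<Longrightarrow>
   (g \<cdot> f) \<otimes> (g' \<cdot> f') = (g \<otimes> g') \<cdot> (f \<otimes> f')"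
  using interchange composable_def by metis

lemma split1: "arr f \<Longrightarrow> arr g \<Longrightarrow> f \<otimes> g = (f \<otimes> c_id C (cod g)) \<cdot> (c_id C (dom f) \<otimes> g)"
  using ic[of "c_id C (dom f)" f g "c_id C (cod g)"] by simp
lemma split2: "arr f \<Longrightarrow> arr g \<Longrightarrow> f \<otimes> g = (c_id C (cod f) \<otimes> g) \<cdot> (f \<otimes> c_id C (dom g))"
  using ic[of f "c_id C (cod f)" "c_id C (dom g)" g] by simp

lemmas tassoc[simp] = tens_assoc
lemmas tid[simp] = tens_id
declare assoc[simp]
lemma tid2[simp]: "arr f \<Longrightarrow> c_id C a \<otimes> (c_id C b \<otimes> f) = c_id C (a \<oplus> b) \<otimes> f"
  by (metis id_arr tassoc tid)

lemma dg_cmp[simp]: "arr f \<Longrightarrow> arr g \<Longrightarrow> dom g = cod f \<Longrightarrow> dg (g \<cdot> f) = dg f \<cdot> dg g"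
  using dag_comp composable_def by metis
lemmas dg_tns[simp] = dag_tens

lemma cs_facts: "mu \<cdot> (mu \<otimes> ii) = mu \<cdot> (ii \<otimes> mu)" "mu \<cdot> (u \<otimes> ii) = ii" "mu \<cdot> (ii \<otimes> u) = ii"
  "(ii \<otimes> mu) \<cdot> (dl \<otimes> ii) = dl \<cdot> mu" "mu \<cdot> dl = ii" "et = dl \<cdot> u"
  using cs unfolding classical_structure_def by auto

lemma H_facts: "dg H = H" "H \<cdot> H = ii" "(H \<otimes> ii) \<cdot> et = (ii \<otimes> H) \<cdot> et"
  "mu \<cdot> (H \<otimes> H) \<cdot> dl = u \<cdot> dg u"
proof -
  show 1: "dg H = H" using cp unfolding complementary_def by auto
  show "H \<cdot> H = ii" using cp 1 unfolding complementary_def unitary_def by auto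
  show "(H \<otimes> ii) \<cdot> et = (ii \<otimes> H) \<cdot> et" using cp unfolding complementary_def by auto
  have "Xi C A mu u 2 1 \<cdot> (H \<otimes> H) \<cdot> Xi C A mu u 1 2 = Xi C A mu u 0 1 \<cdot> Xi C A mu u 1 0"
    using cp unfolding complementary_def by auto
  then show "mu \<cdot> (H \<otimes> H) \<cdot> dl = u \<cdot> dg u"
    by (simp add: Xi_def numeral_eq_Suc)
qed

lemma frob2: "(mu \<otimes> ii) \<cdot> (ii \<otimes> dl) = dl \<cdot> mu"
proof -
  have "dg ((ii \<otimes> mu) \<cdot> (dl \<otimes> ii)) = dg (dl \<cdot> mu)" using cs_facts(4) by simp
  then show ?thesis by simp
qed

lemma coassoc: "(dl \<otimes> ii) \<cdot> dl = (ii \<otimes> dl) \<cdot> dl"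
proof -
  have "dg (mu \<cdot> (mu \<otimes> ii)) = dg (mu \<cdot> (ii \<otimes> mu))" using cs_facts(1) by simp
  then show ?thesis by simp
qed

lemma counit: "(dg u \<otimes> ii) \<cdot> dl = ii" "(ii \<otimes> dg u) \<cdot> dl = ii"
proof -
  have "dg (mu \<cdot> (u \<otimes> ii)) = dg ii" using cs_facts(2) by simp
  then show "(dg u \<otimes> ii) \<cdot> dl = ii" by simp
  have "dg (mu \<cdot> (ii \<otimes> u)) = dg ii" using cs_facts(3) by simp
  then show "(ii \<otimes> dg u) \<cdot> dl = ii" by simp
qed

lemma D1: "(mu \<otimes> ii) \<cdot> (ii \<otimes> et) = dl"
proof -
  have "ii \<otimes> et = (ii \<otimes> dl) \<cdot> (ii \<otimes> u)"
    using ic[of ii ii u dl] cs_facts(6) by simp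
  then have "(mu \<otimes> ii) \<cdot> (ii \<otimes> et) = ((mu \<otimes> ii) \<cdot> (ii \<otimes> dl)) \<cdot> (ii \<otimes> u)" by simp
  also have "\<dots> = dl \<cdot> mu \<cdot> (ii \<otimes> u)" by (simp add: frob2)
  also have "\<dots> = dl" by (simp add: cs_facts(3))
  finally show ?thesis .
qed

lemma D2: "(ii \<otimes> mu) \<cdot> (et \<otimes> ii) = dl"
proof -
  have "et \<otimes> ii = (dl \<otimes> ii) \<cdot> (u \<otimes> ii)"
    using ic[of u dl ii ii] cs_facts(6) by simp
  then have "(ii \<otimes> mu) \<cdot> (et \<otimes> ii) = ((ii \<otimes> mu) \<cdot> (dl \<otimes> ii)) \<cdot> (u \<otimes> ii)" by simp
  also have "\<dots> = dl \<cdot> mu \<cdot> (u \<otimes> ii)" by (simp add: cs_facts(4))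
  also have "\<dots> = dl" by (simp add: cs_facts(2))
  finally show ?thesis .
qed

lemma S1: "(ii \<otimes> et) \<cdot> H = H \<otimes> et"
proof -
  have "(ii \<otimes> et) \<cdot> (H \<otimes> c_id C (c_unit C)) = (ii \<cdot> H) \<otimes> (et \<cdot> c_id C (c_unit C))"
    using ic[of H ii "c_id C (c_unit C)" et] by simp
  then show ?thesis using tens_unit_right[of H] by simp
qed

lemma S1': "(et \<otimes> ii) \<cdot> H = et \<otimes> H"
proof -
  have "(et \<otimes> ii) \<cdot> (c_id C (c_unit C) \<otimes> H) = (et \<cdot> c_id C (c_unit C)) \<otimes> (ii \<cdot> H)"
    using ic[of "c_id C (c_unit C)" et H ii] by simp
  then show ?thesis using tens_unit_left[of H] by simp
qed

lemma X1: "(ii \<otimes> H) \<cdot> dl \<cdot> H = ((mu \<cdot> (H \<otimes> H)) \<otimes> ii) \<cdot> (ii \<otimes> et)"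
proof -
  have e1: "(ii \<otimes> H) \<cdot> (mu \<otimes> ii) = (mu \<otimes> ii) \<cdot> (c_id C (A \<oplus> A) \<otimes> H)"
  proof -
    have "(ii \<otimes> H) \<cdot> (mu \<otimes> ii) = (ii \<cdot> mu) \<otimes> (H \<cdot> ii)" using ic[of mu ii ii H] by simp
    also have "\<dots> = (mu \<cdot> c_id C (A \<oplus> A)) \<otimes> (ii \<cdot> H)" by simp
    also have "\<dots> = (mu \<otimes> ii) \<cdot> (c_id C (A \<oplus> A) \<otimes> H)" using ic[of "c_id C (A \<oplus> A)" mu H ii] by simp
    finally show ?thesis .
  qed
  have e2: "(c_id C (A \<oplus> A) \<otimes> H) \<cdot> (H \<otimes> et) = H \<otimes> ((ii \<otimes> H) \<cdot> et)"
  proof -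
    have "(c_id C (A \<oplus> A) \<otimes> H) = ii \<otimes> (ii \<otimes> H)" by simp
    then have "(c_id C (A \<oplus> A) \<otimes> H) \<cdot> (H \<otimes> et) = (ii \<cdot> H) \<otimes> ((ii \<otimes> H) \<cdot> et)"
      using ic[of H ii et "ii \<otimes> H"] by simp
    then show ?thesis by simp
  qed
  have "(ii \<otimes> H) \<cdot> dl \<cdot> H = (ii \<otimes> H) \<cdot> (mu \<otimes> ii) \<cdot> (ii \<otimes> et) \<cdot> H"
    by (simp flip: D1)
  also have "\<dots> = (ii \<otimes> H) \<cdot> (mu \<otimes> ii) \<cdot> (H \<otimes> et)" by (simp add: S1)
  also have "\<dots> = (mu \<otimes> ii) \<cdot> (c_id C (A \<oplus> A) \<otimes> H) \<cdot> (H \<otimes> et)"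
    using arg_cong[OF e1, of "\<lambda>x. x \<cdot> (H \<otimes> et)"] by simp
  also have "\<dots> = (mu \<otimes> ii) \<cdot> (H \<otimes> ((ii \<otimes> H) \<cdot> et))" by (simp only: e2)
  also have "H \<otimes> ((ii \<otimes> H) \<cdot> et) = H \<otimes> ((H \<otimes> ii) \<cdot> et)" by (simp add: H_facts(3))
  also have "\<dots> = (H \<otimes> H \<otimes> ii) \<cdot> (ii \<otimes> et)"
    using ic[of ii H et "H \<otimes> ii"] by simp
  also have "(mu \<otimes> ii) \<cdot> (H \<otimes> H \<otimes> ii) \<cdot> (ii \<otimes> et) = ((mu \<cdot> (H \<otimes> H)) \<otimes> ii) \<cdot> (ii \<otimes> et)"
    using ic[of "H \<otimes> H" mu ii ii] by simp
  finally show ?thesis .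
qed

lemma X2: "(H \<otimes> ii) \<cdot> dl \<cdot> H = (ii \<otimes> (mu \<cdot> (H \<otimes> H))) \<cdot> (et \<otimes> ii)"
proof -
  have e1: "(H \<otimes> ii) \<cdot> (ii \<otimes> mu) = (ii \<otimes> mu) \<cdot> (H \<otimes> c_id C (A \<oplus> A))"
  proof -
    have "(H \<otimes> ii) \<cdot> (ii \<otimes> mu) = (H \<cdot> ii) \<otimes> (ii \<cdot> mu)" using ic[of ii H mu ii] by simp
    also have "\<dots> = (ii \<cdot> H) \<otimes> (mu \<cdot> c_id C (A \<oplus> A))" by simp
    also have "\<dots> = (ii \<otimes> mu) \<cdot> (H \<otimes> c_id C (A \<oplus> A))" using ic[of H ii "c_id C (A \<oplus> A)" mu] by simp
    finally show ?thesis .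
  qed
  have e2: "(H \<otimes> c_id C (A \<oplus> A)) \<cdot> (et \<otimes> H) = ((H \<otimes> ii) \<cdot> et) \<otimes> H"
  proof -
    have "((H \<otimes> ii) \<cdot> et) \<otimes> (ii \<cdot> H) = ((H \<otimes> ii) \<otimes> ii) \<cdot> (et \<otimes> H)"
      using ic[of et "H \<otimes> ii" H ii] by simp
    then show ?thesis by simp
  qed
  have "(H \<otimes> ii) \<cdot> dl \<cdot> H = (H \<otimes> ii) \<cdot> (ii \<otimes> mu) \<cdot> (et \<otimes> ii) \<cdot> H"
    by (simp flip: D2)
  also have "\<dots> = (H \<otimes> ii) \<cdot> (ii \<otimes> mu) \<cdot> (et \<otimes> H)" by (simp add: S1')
  also have "\<dots> = (ii \<otimes> mu) \<cdot> (H \<otimes> c_id C (A \<oplus> A)) \<cdot> (et \<otimes> H)"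
    using arg_cong[OF e1, of "\<lambda>x. x \<cdot> (et \<otimes> H)"] by simp
  also have "\<dots> = (ii \<otimes> mu) \<cdot> (((H \<otimes> ii) \<cdot> et) \<otimes> H)" by (simp only: e2)
  also have "((H \<otimes> ii) \<cdot> et) \<otimes> H = ((ii \<otimes> H) \<cdot> et) \<otimes> H" by (simp add: H_facts(3))
  also have "\<dots> = (ii \<otimes> H \<otimes> H) \<cdot> (et \<otimes> ii)"
    using ic[of et "ii \<otimes> H" ii H] by simp
  also have "(ii \<otimes> mu) \<cdot> (ii \<otimes> H \<otimes> H) \<cdot> (et \<otimes> ii) = (ii \<otimes> (mu \<cdot> (H \<otimes> H))) \<cdot> (et \<otimes> ii)"
    using ic[of ii ii "H \<otimes> H" mu] by simp
  finally show ?thesis .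
qed

lemma tl_cmp: "arr f \<Longrightarrow> arr g \<Longrightarrow> dom g = cod f \<Longrightarrow> c_id C a \<otimes> (g \<cdot> f) = (c_id C a \<otimes> g) \<cdot> (c_id C a \<otimes> f)"
  using ic[of "c_id C a" "c_id C a" f g] by simp
lemma tr_cmp: "arr f \<Longrightarrow> arr g \<Longrightarrow> dom g = cod f \<Longrightarrow> (g \<cdot> f) \<otimes> c_id C a = (g \<otimes> c_id C a) \<cdot> (f \<otimes> c_id C a)"
  using ic[of f g "c_id C a" "c_id C a"] by simp

abbreviation MM where "MM \<equiv> mu \<cdot> (H \<otimes> H)"

lemma G1: "(ii \<otimes> mu) \<cdot> (ii \<otimes> H \<otimes> ii) \<cdot> (dl \<otimes> ii) \<cdot> (H \<otimes> ii) \<cdot> dl = u \<otimes> ii"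
proof -
  have a: "(ii \<otimes> H \<otimes> ii) \<cdot> (dl \<otimes> ii) \<cdot> (H \<otimes> ii) = ((ii \<otimes> H) \<cdot> dl \<cdot> H) \<otimes> ii"
    by (simp add: tr_cmp)
  have b: "((ii \<otimes> H) \<cdot> dl \<cdot> H) \<otimes> ii = (MM \<otimes> c_id C (A \<oplus> A)) \<cdot> (ii \<otimes> et \<otimes> ii)"
    by (simp add: X1 tr_cmp)
  have c: "(ii \<otimes> mu) \<cdot> (MM \<otimes> c_id C (A \<oplus> A)) = (MM \<otimes> ii) \<cdot> (c_id C (A \<oplus> A) \<otimes> mu)"
  proof -
    have "(ii \<otimes> mu) \<cdot> (MM \<otimes> c_id C (A \<oplus> A)) = (ii \<cdot> MM) \<otimes> (mu \<cdot> c_id C (A \<oplus> A))"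
      using ic[of MM ii "c_id C (A \<oplus> A)" mu] by simp
    also have "\<dots> = (MM \<cdot> c_id C (A \<oplus> A)) \<otimes> (ii \<cdot> mu)" by simp
    also have "\<dots> = (MM \<otimes> ii) \<cdot> (c_id C (A \<oplus> A) \<otimes> mu)"
      using ic[of "c_id C (A \<oplus> A)" MM mu ii] by simp
    finally show ?thesis .
  qed
  have d: "(c_id C (A \<oplus> A) \<otimes> mu) \<cdot> (ii \<otimes> et \<otimes> ii) = ii \<otimes> dl"
  proof -
    have "ii \<otimes> dl = ii \<otimes> ((ii \<otimes> mu) \<cdot> (et \<otimes> ii))" by (simp add: D2)
    also have "\<dots> = (ii \<otimes> ii \<otimes> mu) \<cdot> (ii \<otimes> et \<otimes> ii)" by (simp add: tl_cmp del: tid2)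
    finally show ?thesis by simp
  qed
  have e: "(MM \<otimes> ii) \<cdot> (dl \<otimes> ii) \<cdot> dl = ((MM \<cdot> dl) \<otimes> ii) \<cdot> dl"
    by (simp add: tr_cmp)
  have f: "(u \<cdot> dg u) \<otimes> ii = (u \<otimes> ii) \<cdot> (dg u \<otimes> ii)" by (simp add: tr_cmp)
  have "(ii \<otimes> mu) \<cdot> (ii \<otimes> H \<otimes> ii) \<cdot> (dl \<otimes> ii) \<cdot> (H \<otimes> ii) \<cdot> dl
     = (ii \<otimes> mu) \<cdot> (((ii \<otimes> H \<otimes> ii) \<cdot> (dl \<otimes> ii) \<cdot> (H \<otimes> ii)) \<cdot> dl)" by simp
  also have "\<dots> = (ii \<otimes> mu) \<cdot> (MM \<otimes> c_id C (A \<oplus> A)) \<cdot> (ii \<otimes> et \<otimes> ii) \<cdot> dl"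
    by (simp only: a b) simp
  also have "\<dots> = (MM \<otimes> ii) \<cdot> (c_id C (A \<oplus> A) \<otimes> mu) \<cdot> (ii \<otimes> et \<otimes> ii) \<cdot> dl"
    using arg_cong[OF c, of "\<lambda>x. x \<cdot> (ii \<otimes> et \<otimes> ii) \<cdot> dl"] by simp
  also have "\<dots> = (MM \<otimes> ii) \<cdot> (ii \<otimes> dl) \<cdot> dl"
    using arg_cong[OF d, of "\<lambda>x. (MM \<otimes> ii) \<cdot> x \<cdot> dl"] by simp
  also have "\<dots> = (MM \<otimes> ii) \<cdot> (dl \<otimes> ii) \<cdot> dl" by (simp add: coassoc)
  also have "\<dots> = ((u \<cdot> dg u) \<otimes> ii) \<cdot> dl" using e H_facts(4) by simp
  also have "\<dots> = (u \<otimes> ii) \<cdot> (dg u \<otimes> ii) \<cdot> dl" using f by simp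
  also have "\<dots> = u \<otimes> ii" by (simp add: counit)
  finally show ?thesis .
qed

lemma G2: "(mu \<otimes> ii) \<cdot> (ii \<otimes> H \<otimes> ii) \<cdot> (ii \<otimes> dl) \<cdot> (ii \<otimes> H) \<cdot> dl = ii \<otimes> u"
proof -
  have a: "(ii \<otimes> H \<otimes> ii) \<cdot> (ii \<otimes> dl) \<cdot> (ii \<otimes> H) = ii \<otimes> ((H \<otimes> ii) \<cdot> dl \<cdot> H)"
    by (simp add: tl_cmp)
  have b: "ii \<otimes> ((H \<otimes> ii) \<cdot> dl \<cdot> H) = (c_id C (A \<oplus> A) \<otimes> MM) \<cdot> (ii \<otimes> et \<otimes> ii)"
    by (simp add: X2 tl_cmp)
  have c: "(mu \<otimes> ii) \<cdot> (c_id C (A \<oplus> A) \<otimes> MM) = (ii \<otimes> MM) \<cdot> (mu \<otimes> c_id C (A \<oplus> A))"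
  proof -
    have "(mu \<otimes> ii) \<cdot> (c_id C (A \<oplus> A) \<otimes> MM) = (mu \<cdot> c_id C (A \<oplus> A)) \<otimes> (ii \<cdot> MM)"
      using ic[of "c_id C (A \<oplus> A)" mu MM ii] by simp
    also have "\<dots> = (ii \<cdot> mu) \<otimes> (MM \<cdot> c_id C (A \<oplus> A))" by simp
    also have "\<dots> = (ii \<otimes> MM) \<cdot> (mu \<otimes> c_id C (A \<oplus> A))"
      using ic[of mu ii "c_id C (A \<oplus> A)" MM] by simp
    finally show ?thesis .
  qed
  have d: "(mu \<otimes> c_id C (A \<oplus> A)) \<cdot> (ii \<otimes> et \<otimes> ii) = dl \<otimes> ii"
  proof -
    have "dl \<otimes> ii = ((mu \<otimes> ii) \<cdot> (ii \<otimes> et)) \<otimes> ii" by (simp add: D1)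
    also have "\<dots> = ((mu \<otimes> ii) \<otimes> ii) \<cdot> ((ii \<otimes> et) \<otimes> ii)" by (simp add: tr_cmp del: tassoc)
    finally show ?thesis by simp
  qed
  have e: "(ii \<otimes> MM) \<cdot> (ii \<otimes> dl) \<cdot> dl = (ii \<otimes> (MM \<cdot> dl)) \<cdot> dl"
    by (simp add: tl_cmp)
  have f: "ii \<otimes> (u \<cdot> dg u) = (ii \<otimes> u) \<cdot> (ii \<otimes> dg u)" by (simp add: tl_cmp)
  have "(mu \<otimes> ii) \<cdot> (ii \<otimes> H \<otimes> ii) \<cdot> (ii \<otimes> dl) \<cdot> (ii \<otimes> H) \<cdot> dl
     = (mu \<otimes> ii) \<cdot> (((ii \<otimes> H \<otimes> ii) \<cdot> (ii \<otimes> dl) \<cdot> (ii \<otimes> H)) \<cdot> dl)" by simp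
  also have "\<dots> = (mu \<otimes> ii) \<cdot> (c_id C (A \<oplus> A) \<otimes> MM) \<cdot> (ii \<otimes> et \<otimes> ii) \<cdot> dl"
    by (simp only: a b) simp
  also have "\<dots> = (ii \<otimes> MM) \<cdot> (mu \<otimes> c_id C (A \<oplus> A)) \<cdot> (ii \<otimes> et \<otimes> ii) \<cdot> dl"
    using arg_cong[OF c, of "\<lambda>x. x \<cdot> (ii \<otimes> et \<otimes> ii) \<cdot> dl"] by simp
  also have "\<dots> = (ii \<otimes> MM) \<cdot> (dl \<otimes> ii) \<cdot> dl"
    using arg_cong[OF d, of "\<lambda>x. (ii \<otimes> MM) \<cdot> x \<cdot> dl"] by simp
  also have "\<dots> = (ii \<otimes> MM) \<cdot> (ii \<otimes> dl) \<cdot> dl" by (simp add: coassoc)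
  also have "\<dots> = (ii \<otimes> (u \<cdot> dg u)) \<cdot> dl" using e H_facts(4) by simp
  also have "\<dots> = (ii \<otimes> u) \<cdot> (ii \<otimes> dg u) \<cdot> dl" using f by simp
  also have "\<dots> = ii \<otimes> u" by (simp add: counit)
  finally show ?thesis .
qed

abbreviation KK where "KK \<equiv> (mu \<otimes> ii) \<cdot> (ii \<otimes> H \<otimes> ii) \<cdot> (ii \<otimes> dl)"
abbreviation Kd where "Kd \<equiv> (ii \<otimes> mu) \<cdot> (ii \<otimes> H \<otimes> ii) \<cdot> (dl \<otimes> ii)"
abbreviation I2 where "I2 \<equiv> c_id C (A \<oplus> A)"

lemma dgK: "dg KK = Kd" by (simp add: H_facts(1))

lemma KdK: "Kd \<cdot> KK = I2"
proof -
  have p: "(dl \<otimes> ii) \<cdot> (mu \<otimes> ii) = (mu \<otimes> I2) \<cdot> (ii \<otimes> dl \<otimes> ii)"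
  proof -
    have "(dl \<otimes> ii) \<cdot> (mu \<otimes> ii) = (dl \<cdot> mu) \<otimes> ii" by (simp add: tr_cmp)
    also have "\<dots> = ((mu \<otimes> ii) \<cdot> (ii \<otimes> dl)) \<otimes> ii" by (simp add: frob2)
    also have "\<dots> = ((mu \<otimes> ii) \<otimes> ii) \<cdot> ((ii \<otimes> dl) \<otimes> ii)" by (simp add: tr_cmp del: tassoc)
    finally show ?thesis by simp
  qed
  have q: "(ii \<otimes> H \<otimes> ii) \<cdot> (mu \<otimes> I2) = (mu \<otimes> I2) \<cdot> (I2 \<otimes> H \<otimes> ii)"
  proof -
    have "(ii \<otimes> H \<otimes> ii) \<cdot> (mu \<otimes> I2) = (ii \<cdot> mu) \<otimes> ((H \<otimes> ii) \<cdot> I2)"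
      using ic[of mu ii I2 "H \<otimes> ii"] by simp
    also have "\<dots> = (mu \<cdot> I2) \<otimes> (I2 \<cdot> (H \<otimes> ii))" by simp
    also have "\<dots> = (mu \<otimes> I2) \<cdot> (I2 \<otimes> H \<otimes> ii)"
      using ic[of I2 mu "H \<otimes> ii" I2] by simp
    finally show ?thesis .
  qed
  have r: "(ii \<otimes> mu) \<cdot> (mu \<otimes> I2) = (mu \<otimes> ii) \<cdot> (I2 \<otimes> mu)"
  proof -
    have "(ii \<otimes> mu) \<cdot> (mu \<otimes> I2) = (ii \<cdot> mu) \<otimes> (mu \<cdot> I2)"
      using ic[of mu ii I2 mu] by simp
    also have "\<dots> = (mu \<cdot> I2) \<otimes> (ii \<cdot> mu)" by simp
    also have "\<dots> = (mu \<otimes> ii) \<cdot> (I2 \<otimes> mu)"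
      using ic[of I2 mu mu ii] by simp
    finally show ?thesis .
  qed
  have s: "(I2 \<otimes> mu) \<cdot> (I2 \<otimes> H \<otimes> ii) \<cdot> (ii \<otimes> dl \<otimes> ii) \<cdot> (ii \<otimes> H \<otimes> ii) \<cdot> (ii \<otimes> dl) = ii \<otimes> u \<otimes> ii"
  proof -
    have "ii \<otimes> ((ii \<otimes> mu) \<cdot> (ii \<otimes> H \<otimes> ii) \<cdot> (dl \<otimes> ii) \<cdot> (H \<otimes> ii) \<cdot> dl) = ii \<otimes> (u \<otimes> ii)"
      by (simp only: G1)
    then show ?thesis by (simp add: tl_cmp)
  qed
  have t: "(mu \<otimes> ii) \<cdot> (ii \<otimes> u \<otimes> ii) = I2"
  proof -
    have "(mu \<cdot> (ii \<otimes> u)) \<otimes> (ii \<cdot> ii) = (mu \<otimes> ii) \<cdot> ((ii \<otimes> u) \<otimes> ii)"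
      using ic[of "ii \<otimes> u" mu ii ii] by simp
    then show ?thesis by (simp add: cs_facts(3))
  qed
  have "Kd \<cdot> KK = (ii \<otimes> mu) \<cdot> (ii \<otimes> H \<otimes> ii) \<cdot> ((dl \<otimes> ii) \<cdot> (mu \<otimes> ii)) \<cdot> (ii \<otimes> H \<otimes> ii) \<cdot> (ii \<otimes> dl)"
    by simp
  also have "\<dots> = (ii \<otimes> mu) \<cdot> ((ii \<otimes> H \<otimes> ii) \<cdot> (mu \<otimes> I2)) \<cdot> (ii \<otimes> dl \<otimes> ii) \<cdot> (ii \<otimes> H \<otimes> ii) \<cdot> (ii \<otimes> dl)"
    by (simp only: p) simp
  also have "\<dots> = ((ii \<otimes> mu) \<cdot> (mu \<otimes> I2)) \<cdot> (I2 \<otimes> H \<otimes> ii) \<cdot> (ii \<otimes> dl \<otimes> ii) \<cdot> (ii \<otimes> H \<otimes> ii) \<cdot> (ii \<otimes> dl)"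
    by (simp only: q) simp
  also have "\<dots> = (mu \<otimes> ii) \<cdot> ((I2 \<otimes> mu) \<cdot> (I2 \<otimes> H \<otimes> ii) \<cdot> (ii \<otimes> dl \<otimes> ii) \<cdot> (ii \<otimes> H \<otimes> ii) \<cdot> (ii \<otimes> dl))"
    by (simp only: r) simp
  also have "\<dots> = I2" by (simp only: s t)
  finally show ?thesis .
qed

lemma KKd: "KK \<cdot> Kd = I2"
proof -
  have p: "(ii \<otimes> dl) \<cdot> (ii \<otimes> mu) = (I2 \<otimes> mu) \<cdot> (ii \<otimes> dl \<otimes> ii)"
  proof -
    have "(ii \<otimes> dl) \<cdot> (ii \<otimes> mu) = ii \<otimes> (dl \<cdot> mu)" by (simp add: tl_cmp)
    also have "\<dots> = ii \<otimes> ((ii \<otimes> mu) \<cdot> (dl \<otimes> ii))" by (simp add: cs_facts(4))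
    also have "\<dots> = (ii \<otimes> (ii \<otimes> mu)) \<cdot> (ii \<otimes> (dl \<otimes> ii))" by (simp add: tl_cmp del: tid2)
    finally show ?thesis by simp
  qed
  have q: "(ii \<otimes> H \<otimes> ii) \<cdot> (I2 \<otimes> mu) = (I2 \<otimes> mu) \<cdot> (ii \<otimes> H \<otimes> I2)"
  proof -
    have "(ii \<otimes> H \<otimes> ii) \<cdot> (I2 \<otimes> mu) = ((ii \<otimes> H) \<otimes> ii) \<cdot> (I2 \<otimes> mu)" by simp
    also have "\<dots> = ((ii \<otimes> H) \<cdot> I2) \<otimes> (ii \<cdot> mu)"
      using ic[of I2 "ii \<otimes> H" mu ii] by simp
    also have "\<dots> = (I2 \<cdot> (ii \<otimes> H)) \<otimes> (mu \<cdot> I2)" by simp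
    also have "\<dots> = (I2 \<otimes> mu) \<cdot> ((ii \<otimes> H) \<otimes> I2)"
      using ic[of "ii \<otimes> H" I2 I2 mu] by simp
    finally show ?thesis by simp
  qed
  have r: "(mu \<otimes> ii) \<cdot> (I2 \<otimes> mu) = (ii \<otimes> mu) \<cdot> (mu \<otimes> I2)"
  proof -
    have "(mu \<otimes> ii) \<cdot> (I2 \<otimes> mu) = (mu \<cdot> I2) \<otimes> (ii \<cdot> mu)"
      using ic[of I2 mu mu ii] by simp
    also have "\<dots> = (ii \<cdot> mu) \<otimes> (mu \<cdot> I2)" by simp
    also have "\<dots> = (ii \<otimes> mu) \<cdot> (mu \<otimes> I2)"
      using ic[of mu ii I2 mu] by simp
    finally show ?thesis .
  qed
  have s: "(mu \<otimes> I2) \<cdot> (ii \<otimes> H \<otimes> I2) \<cdot> (ii \<otimes> dl \<otimes> ii) \<cdot> (ii \<otimes> H \<otimes> ii) \<cdot> (dl \<otimes> ii) = ii \<otimes> u \<otimes> ii"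
  proof -
    have "((mu \<otimes> ii) \<cdot> (ii \<otimes> H \<otimes> ii) \<cdot> (ii \<otimes> dl) \<cdot> (ii \<otimes> H) \<cdot> dl) \<otimes> ii = (ii \<otimes> u) \<otimes> ii"
      by (simp only: G2)
    then show ?thesis by (simp add: tr_cmp)
  qed
  have t: "(ii \<otimes> mu) \<cdot> (ii \<otimes> u \<otimes> ii) = I2"
  proof -
    have "(ii \<cdot> ii) \<otimes> (mu \<cdot> (u \<otimes> ii)) = (ii \<otimes> mu) \<cdot> (ii \<otimes> (u \<otimes> ii))"
      using ic[of ii ii "u \<otimes> ii" mu] by simp
    then show ?thesis by (simp add: cs_facts(2))
  qed
  have "KK \<cdot> Kd = (mu \<otimes> ii) \<cdot> (ii \<otimes> H \<otimes> ii) \<cdot> ((ii \<otimes> dl) \<cdot> (ii \<otimes> mu)) \<cdot> (ii \<otimes> H \<otimes> ii) \<cdot> (dl \<otimes> ii)"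
    by simp
  also have "\<dots> = (mu \<otimes> ii) \<cdot> ((ii \<otimes> H \<otimes> ii) \<cdot> (I2 \<otimes> mu)) \<cdot> (ii \<otimes> dl \<otimes> ii) \<cdot> (ii \<otimes> H \<otimes> ii) \<cdot> (dl \<otimes> ii)"
    by (simp only: p) simp
  also have "\<dots> = ((mu \<otimes> ii) \<cdot> (I2 \<otimes> mu)) \<cdot> (ii \<otimes> H \<otimes> I2) \<cdot> (ii \<otimes> dl \<otimes> ii) \<cdot> (ii \<otimes> H \<otimes> ii) \<cdot> (dl \<otimes> ii)"
    by (simp only: q) simp
  also have "\<dots> = (ii \<otimes> mu) \<cdot> ((mu \<otimes> I2) \<cdot> (ii \<otimes> H \<otimes> I2) \<cdot> (ii \<otimes> dl \<otimes> ii) \<cdot> (ii \<otimes> H \<otimes> ii) \<cdot> (dl \<otimes> ii))"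
    by (simp only: r) simp
  also have "\<dots> = I2" by (simp only: s t)
  finally show ?thesis .
qed

lemma unitary_cmp: "unitary C f \<Longrightarrow> unitary C g \<Longrightarrow> dom g = cod f \<Longrightarrow> unitary C (g \<cdot> f)"
proof -
  assume f: "unitary C f" and g: "unitary C g" and d: "dom g = cod f"
  have af: "arr f" and ag: "arr g" using f g unfolding unitary_def by auto
  have f1: "dg f \<cdot> f = c_id C (dom f)" and f2: "f \<cdot> dg f = c_id C (cod f)"
    and g1: "dg g \<cdot> g = c_id C (dom g)" and g2: "g \<cdot> dg g = c_id C (cod g)"
    using f g unfolding unitary_def by auto
  have "dg (g \<cdot> f) \<cdot> (g \<cdot> f) = dg f \<cdot> ((dg g \<cdot> g) \<cdot> f)" using af ag d by simp
  also have "\<dots> = c_id C (dom f)" using g1 f1 af ag d by simp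
  finally have 1: "dg (g \<cdot> f) \<cdot> (g \<cdot> f) = c_id C (dom (g \<cdot> f))" using af ag d by simp
  have "(g \<cdot> f) \<cdot> dg (g \<cdot> f) = g \<cdot> ((f \<cdot> dg f) \<cdot> dg g)" using af ag d by simp
  also have "\<dots> = c_id C (cod g)" using g2 f2 af ag d by simp
  finally have 2: "(g \<cdot> f) \<cdot> dg (g \<cdot> f) = c_id C (cod (g \<cdot> f))" using af ag d by simp
  show ?thesis using 1 2 af ag d unfolding unitary_def by simp
qed

lemma unitary_tns: "unitary C f \<Longrightarrow> unitary C g \<Longrightarrow> unitary C (f \<otimes> g)"
proof -
  assume f: "unitary C f" and g: "unitary C g"
  have af: "arr f" and ag: "arr g" using f g unfolding unitary_def by auto
  have f1: "dg f \<cdot> f = c_id C (dom f)" and f2: "f \<cdot> dg f = c_id C (cod f)"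
    and g1: "dg g \<cdot> g = c_id C (dom g)" and g2: "g \<cdot> dg g = c_id C (cod g)"
    using f g unfolding unitary_def by auto
  have 1: "dg (f \<otimes> g) \<cdot> (f \<otimes> g) = (dg f \<cdot> f) \<otimes> (dg g \<cdot> g)"
    using ic[of f "dg f" g "dg g"] af ag by simp
  have 2: "(f \<otimes> g) \<cdot> dg (f \<otimes> g) = (f \<cdot> dg f) \<otimes> (g \<cdot> dg g)"
    using ic[of "dg f" f "dg g" g] af ag by simp
  show ?thesis using 1 2 f1 f2 g1 g2 af ag unfolding unitary_def by simp
qed

lemma unitary_H: "unitary C H" using cp unfolding complementary_def by auto
lemma unitary_id: "unitary C (c_id C a)" unfolding unitary_def by simp
lemma unitary_K: "unitary C KK"
  unfolding unitary_def using dgK KdK KKd by simp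

lemma pure_facts: "c_pure C mu" "c_pure C H" "c_pure C dl" "c_pure C u"
  using cs cp pure_dag unfolding classical_structure_def complementary_def by auto

lemma CNOT_eq: "CNOT C A mu u H = (ii \<otimes> H) \<cdot> KK \<cdot> (ii \<otimes> H)"
proof -
  have "mu \<otimes> H = (ii \<otimes> H) \<cdot> (mu \<otimes> ii)" using ic[of mu ii ii H] by simp
  then show ?thesis unfolding CNOT_def by (simp add: Xi_def numeral_eq_Suc)
qed

lemma main: "\<exists>U. c_pure C U \<and> dom U = A \<oplus> A \<and> cod U = A \<oplus> A
           \<and> unitary C U
           \<and> Bell_Meas C A mu u H
               = (classical_channel C A mu u \<otimes> classical_channel C A mu u) \<cdot> U"
proof (intro exI conjI)
  let ?U = "(H \<otimes> ii) \<cdot> (ii \<otimes> H) \<cdot> KK \<cdot> (ii \<otimes> H)"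
  have pH: "c_pure C (ii \<otimes> H)" "c_pure C (H \<otimes> ii)" "c_pure C (ii \<otimes> H \<otimes> ii)" "c_pure C (ii \<otimes> dl)"
    "c_pure C (mu \<otimes> ii)"
    using pure_facts pure_id pure_tens by auto
  show "c_pure C ?U" using pH by (simp add: pure_comp)
  show "dom ?U = A \<oplus> A" by simp
  show "cod ?U = A \<oplus> A" by simp
  show "unitary C ?U"
    by (intro unitary_cmp unitary_tns unitary_K unitary_H unitary_id) auto
  have cc: "classical_channel C A mu u = (ii \<otimes> c_top C A) \<cdot> dl"
    unfolding classical_channel_def by (simp add: Xi_def numeral_eq_Suc)
  let ?c = "(ii \<otimes> c_top C A) \<cdot> dl"
  have "(?c \<otimes> ?c) \<cdot> (H \<otimes> ii) = (?c \<cdot> H) \<otimes> (?c \<cdot> ii)"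
    using ic[of H ?c ii ?c] by simp
  then have "(?c \<cdot> H) \<otimes> ?c = (?c \<otimes> ?c) \<cdot> (H \<otimes> ii)" by simp
  then show "Bell_Meas C A mu u H = (classical_channel C A mu u \<otimes> classical_channel C A mu u) \<cdot> ?U"
    unfolding Bell_Meas_def CNOT_eq cc
    using arg_cong[of _ _ "\<lambda>x. x \<cdot> (ii \<otimes> H) \<cdot> KK \<cdot> (ii \<otimes> H)"] by simp
qed

end

theorem mainTheorem5:
  fixes C :: "('o, 'm, 'z) env_cat_scheme" and A :: 'o and mu u H :: 'm
  assumes "environment_category C"
    and "classical_structure C A mu u"
    and "complementary C A mu u H"
  shows "\<exists>U. c_pure C U \<and> c_dom C U = c_otimes C A A \<and> c_cod C U = c_otimes C A A
           \<and> unitary C U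
           \<and> Bell_Meas C A mu u H
               = c_comp C (c_tens C (classical_channel C A mu u) (classical_channel C A mu u)) U"
proof -
  interpret bell C A mu u H
    using assms by (simp add: bell_def bell_axioms_def)
  show ?thesis using main .
qed

end
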